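(* Let $n\ge 1$ and $k\ge 3$ be integers and set $p:=k-2>0$. Let $\{v_1,\dots,v_n\}$ be an orthonormal basis of $\mathbb{R}^n$, $V=[v_1,\dots,v_n]$, and let $\lambda_1,\dots,\lambda_n,\kappa_1,\dots,\kappa_n\in\mathbb{R}$. Define the $k$th-order tensor $\mathcal A=\sum_{r=1}^n \lambda_r v_r^{\otimes k}$ and the matrix $K=\sum_{r=1}^n\kappa_r v_r v_r^\top$, and consider the closed-loop system $$\dot x = Kx+\mathcal A x^{k-1},\qquad x(t)\in\mathbb{R}^n.$$ Define the modal coordinates $y(t):=V^\top x(t)$, i.e. $y_r(t)=v_r^\top x(t)$, and $y_{r,0}:=y_r(0)=v_r^\top x(0)$. Then the dynamics decouple as $$\dot y_r=\kappa_r y_r+\lambda_r y_r^{k-1},\qquad r=1,\dots,n,$$ and the state is reconstructed by $x(t)=\sum_{r=1}^n y_r(t)v_r$. Moreover: (i) If $\kappa_r\neq 0$, then on any time interval on which $y_r(t)\neq 0$, the trajectory satisfies $$y_r(t)=y_{r,0}\Big[e^{-p\kappa_r t}-\frac{\lambda_r}{\kappa_r}\,y_{r,0}^{p}\big(1-e^{-p\kappa_r t}\big)\Big]^{-1/p},$$ valid on the maximal interval on which the bracketed term is positive. (ii) If $\kappa_r=0$, then on any time interval on which $y_r(t)\neq 0$, $$y_r(t)=y_{r,0}\big(1-p\lambda_r y_{r,0}^{p}\,t\big)^{-1/p},$$ valid on the maximal interval on which $1-p\lambda_r y_{r,0}^p t>0$.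
   Context: For $v\in\mathbb{R}^n$, $v^{\otimes k}$ is the $k$th-order tensor with entries $(v^{\otimes k})_{i_1\cdots i_k}=v_{i_1}\cdots v_{i_k}$. For a $k$th-order tensor $\mathcal A=(a_{i_1\cdots i_k})$ and $x\in\mathbb{R}^n$, $\mathcal A x^{k-1}\in\mathbb{R}^n$ is defined by $(\mathcal A x^{k-1})_i=\sum_{i_2,\dots,i_k=1}^n a_{i i_2\cdots i_k}x_{i_2}\cdots x_{i_k}$. A tensor of the form $\sum_r\lambda_r v_r^{\otimes k}$ with $\{v_r\}$ orthonormal is called orthogonally decomposable (ODECO). *)

theory Defs
  imports "HOL-Analysis.Analysis"
begin

text \<open>A k-th order tensor over index type 'n is represented by its entry function
  on index lists (only lists of length k are meaningful).\<close>

definition tpow :: "real^'n \<Rightarrow> ('n list \<Rightarrow> real)" where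
  "tpow v = (\<lambda>is. prod_list (map (\<lambda>i. v $ i) is))"

definition tensor_apply :: "('n::finite list \<Rightarrow> real) \<Rightarrow> nat \<Rightarrow> real^'n \<Rightarrow> real^'n" where
  "tensor_apply A k x =
     (\<chi> i. \<Sum>js\<in>{js. length js = k - 1}. A (i # js) * prod_list (map (\<lambda>j. x $ j) js))"

definition outer :: "real^'n \<Rightarrow> real^'n \<Rightarrow> real^'n^'n" where
  "outer v w = (\<chi> i j. v $ i * w $ j)"

end

theory Submission imports Defs begin

lemma same_sign:
  fixes y :: "real \<Rightarrow> real"
  assumes J: "is_interval J" and "0 \<in> J" and c: "continuous_on J y"
    and nz: "\<forall>t\<in>J. y t \<noteq> 0" and t: "t \<in> J"
  shows "y 0 * y t > 0"
proof (rule ccontr)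
  assume "\<not> ?thesis"
  hence neg: "y 0 * y t < 0" using nz t \<open>0\<in>J\<close> by (simp add: linorder_not_less) (metis mult_eq_0_iff order_le_less)
  have "connected (y ` J)" using J c connected_continuous_image is_interval_connected_1 by blast
  hence ii: "is_interval (y ` J)" using is_interval_connected_1 by blast
  have a: "y 0 \<in> y ` J" "y t \<in> y ` J" using t \<open>0\<in>J\<close> by auto
  have "0 \<in> y ` J"
  proof (cases "y 0 < 0")
    case True
    hence "y t > 0" using neg by (simp add: mult_less_0_iff)
    then show ?thesis using ii a True unfolding is_interval_1 by (meson less_le)
  next
    case False
    hence "y 0 > 0" "y t < 0" using neg by (auto simp add: mult_less_0_iff)
    then show ?thesis using ii a unfolding is_interval_1 by (meson less_le)
  qed
  thus False using nz by auto
qed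

lemma final_powr:
  fixes y0 yt B :: real and p :: nat
  assumes "p \<ge> 1" "y0 * yt > 0" "B = (y0 / yt) ^ p"
  shows "B > 0 \<and> yt = y0 * B powr (- 1 / real p)"
proof -
  have q: "y0 / yt > 0" using assms(2) by (metis divide_pos_pos mult_less_0_iff divide_neg_neg zero_less_mult_iff)
  have "B = (y0/yt) powr real p" using assms(3) q by (simp add: powr_realpow)
  hence "B powr (- 1 / real p) = (y0/yt) powr (-1)" using assms(1) by (simp add: powr_powr)
  also have "\<dots> = \<bar>yt\<bar> / \<bar>y0\<bar>" using q by (simp add: powr_minus_divide)
  also have "\<dots> = yt / y0" using q by (metis abs_divide abs_of_pos zero_less_divide_iff)
  finally show ?thesis using q assms by auto
qed

lemma solve_B:
  fixes yt y0 B :: real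
  assumes "yt \<noteq> 0" "yt ^ p * B = y0 ^ p"
  shows "B = (y0 / yt) ^ p"
  using assms by (simp add: power_divide eq_divide_eq mult.commute)

lemma alg_B:
  fixes a b q E :: real
  assumes "a \<noteq> 0" "b \<noteq> 0" "inverse a = (inverse b + q) * E - q"
  shows "a * (E - q * b * (1 - E)) = b"
proof -
  have "a * (E - q * b * (1 - E)) = a * b * ((inverse b + q) * E - q)"
    using assms(2) by (simp add: algebra_simps)
  also have "\<dots> = a * b * inverse a" using assms(3) by simp
  finally show ?thesis using assms(1) by simp
qed

lemma scalar_ode:
  fixes y :: "real \<Rightarrow> real" and p :: nat
  assumes J: "is_interval J" and J0: "0 \<in> J" and p: "p \<ge> 1"
    and D: "\<And>t. t \<in> J \<Longrightarrow> (y has_real_derivative (c * y t + l * y t ^ Suc p)) (at t within J)"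
    and nz: "\<forall>t\<in>J. y t \<noteq> 0" and t: "t \<in> J"
  shows "y t ^ p * (if c = 0 then 1 - real p * l * y 0 ^ p * t
     else exp (- real p * c * t) - l / c * y 0 ^ p * (1 - exp (- real p * c * t))) = y 0 ^ p"
proof -
  have Du: "((\<lambda>s. inverse (y s ^ p)) has_real_derivative (- real p * c * inverse (y s ^ p) - real p * l)) (at s within J)"
    if s: "s \<in> J" for s
  proof -
    have ys: "y s \<noteq> 0" using nz s by auto
    have pp: "y s * y s ^ (p - Suc 0) = y s ^ p" using p by (cases p) auto
    show ?thesis
      apply (rule derivative_eq_intros D[OF s] refl | simp add: ys)+
      using ys p pp by (simp add: field_simps power_Suc2)
  qed
  have cvx: "convex J" using J by (simp add: is_interval_convex_1)
  have y0: "y 0 \<noteq> 0" and yt: "y t \<noteq> 0" using nz J0 t by auto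
  show ?thesis
  proof (cases "c = 0")
    case True
    have "\<exists>C. \<forall>s\<in>J. inverse (y s ^ p) + real p * l * s = C"
    proof (rule has_field_derivative_zero_constant[OF cvx])
      fix s assume s: "s \<in> J"
      have h: "((\<lambda>s. real p * l * s) has_real_derivative real p * l) (at s within J)"
        using DERIV_cmult_Id[of "real p * l" s J] by simp
      show "((\<lambda>s. inverse (y s ^ p) + real p * l * s) has_real_derivative 0) (at s within J)"
        using DERIV_add[OF Du[OF s] h] True by simp
    qed
    then obtain C where C: "\<forall>s\<in>J. inverse (y s ^ p) + real p * l * s = C" by blast
    have "inverse (y t ^ p) + real p * l * t = inverse (y 0 ^ p)" using C t J0 by force
    then show ?thesis using True y0 yt by (simp add: field_simps)
  next
    case False
    have "\<exists>C. \<forall>s\<in>J. (inverse (y s ^ p) + l / c) * exp (real p * c * s) = C"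
    proof (rule has_field_derivative_zero_constant[OF cvx])
      fix s assume s: "s \<in> J"
      have h: "((\<lambda>s. real p * c * s) has_real_derivative real p * c) (at s within J)"
        using DERIV_cmult_Id[of "real p * c" s J] by simp
      have h2: "((\<lambda>s. exp (real p * c * s)) has_real_derivative exp (real p * c * s) * (real p * c)) (at s within J)"
        by (rule DERIV_chain2[OF DERIV_exp h])
      have h3: "((\<lambda>s. inverse (y s ^ p) + l / c) has_real_derivative (- real p * c * inverse (y s ^ p) - real p * l) + 0) (at s within J)"
        by (rule DERIV_add[OF Du[OF s] DERIV_const])
      show "((\<lambda>s. (inverse (y s ^ p) + l / c) * exp (real p * c * s)) has_real_derivative 0) (at s within J)"
        apply (rule DERIV_cong[OF DERIV_mult[OF h3 h2]])
        using False by (simp add: field_simps)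
    qed
    then obtain C where C: "\<forall>s\<in>J. (inverse (y s ^ p) + l / c) * exp (real p * c * s) = C" by blast
    have e: "(inverse (y t ^ p) + l / c) * exp (real p * c * t) = inverse (y 0 ^ p) + l / c" using C t J0 by force
    have ee: "exp (- real p * c * t) * exp (real p * c * t) = 1" by (simp add: exp_minus[symmetric] exp_add[symmetric])
    have "inverse (y t ^ p) = (inverse (y 0 ^ p) + l / c) * exp (- real p * c * t) - l / c"
    proof -
      have "inverse (y t ^ p) + l / c = (inverse (y t ^ p) + l / c) * exp (real p * c * t) * exp (- real p * c * t)"
        using ee by (simp add: mult.assoc mult.commute)
      also have "\<dots> = (inverse (y 0 ^ p) + l / c) * exp (- real p * c * t)" using e by simp
      finally show ?thesis by simp
    qed
    from alg_B[OF _ _ this] show ?thesis using False y0 yt by simp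
  qed
qed

lemma sum_lists_prod:
  fixes f :: "'a::finite \<Rightarrow> real"
  shows "(\<Sum>js\<in>{js. length js = m}. prod_list (map f js)) = (sum f UNIV) ^ m"
proof (induction m)
  case 0
  then show ?case by simp
next
  case (Suc m)
  have eq: "{js::'a list. length js = Suc m} = (\<lambda>(j, js). j # js) ` (UNIV \<times> {js. length js = m})"
    by (auto simp: length_Suc_conv image_iff)
  have inj: "inj_on (\<lambda>(j, js). j # js) (UNIV \<times> {js::'a list. length js = m})"
    by (auto simp: inj_on_def)
  have "(\<Sum>js\<in>{js. length js = Suc m}. prod_list (map f js))
      = (\<Sum>(j, js)\<in>UNIV \<times> {js. length js = m}. f j * prod_list (map f js))"
    unfolding eq by (subst sum.reindex[OF inj]) (simp add: case_prod_unfold)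
  also have "\<dots> = (\<Sum>j\<in>UNIV. \<Sum>js\<in>{js. length js = m}. f j * prod_list (map f js))"
    by (rule sum.cartesian_product[symmetric])
  also have "\<dots> = sum f UNIV * (sum f UNIV) ^ m"
    by (simp add: sum_distrib_left[symmetric] Suc sum_distrib_right)
  finally show ?case by simp
qed

lemma prod_list_map_mult:
  "prod_list (map (\<lambda>j. f j * g j) js) = prod_list (map f js) * (prod_list (map g js) :: real)"
  by (induction js) (auto simp: mult_ac)

lemma K_apply:
  fixes v :: "'n::finite \<Rightarrow> real^'n"
  shows "(\<Sum>r\<in>UNIV. kap r *\<^sub>R outer (v r) (v r)) *v x = (\<Sum>r\<in>UNIV. (kap r * (v r \<bullet> x)) *\<^sub>R v r)"
proof -
  have "(\<Sum>j\<in>UNIV. (\<Sum>r\<in>UNIV. kap r * (v r $ i * v r $ j)) * x $ j)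
     = (\<Sum>r\<in>UNIV. kap r * (\<Sum>j\<in>UNIV. v r $ j * x $ j) * v r $ i)" for i
  proof -
    have "(\<Sum>j\<in>UNIV. (\<Sum>r\<in>UNIV. kap r * (v r $ i * v r $ j)) * x $ j)
       = (\<Sum>j\<in>UNIV. \<Sum>r\<in>UNIV. kap r * v r $ i * (v r $ j * x $ j))"
      by (simp add: sum_distrib_right sum_distrib_left mult_ac)
    also have "\<dots> = (\<Sum>r\<in>UNIV. \<Sum>j\<in>UNIV. kap r * v r $ i * (v r $ j * x $ j))"
      by (rule sum.swap)
    also have "\<dots> = (\<Sum>r\<in>UNIV. kap r * (\<Sum>j\<in>UNIV. v r $ j * x $ j) * v r $ i)"
      by (simp add: sum_distrib_left mult_ac)
    finally show ?thesis .
  qed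
  then show ?thesis
    by (simp add: vec_eq_iff matrix_vector_mult_def outer_def inner_vec_def sum_component)
qed

lemma T_apply:
  fixes v :: "'n::finite \<Rightarrow> real^'n"
  shows "tensor_apply (\<lambda>is. \<Sum>r\<in>UNIV. lam r * tpow (v r) is) k x
       = (\<Sum>r\<in>UNIV. (lam r * (v r \<bullet> x) ^ (k - 1)) *\<^sub>R v r)"
proof -
  have "(\<Sum>js\<in>{js. length js = k - 1}. (\<Sum>r\<in>UNIV. lam r * tpow (v r) (i # js)) * prod_list (map (\<lambda>j. x $ j) js))
     = (\<Sum>r\<in>UNIV. lam r * v r $ i * (v r \<bullet> x) ^ (k - 1))" for i
  proof -
    have "(\<Sum>js\<in>{js. length js = k - 1}. (\<Sum>r\<in>UNIV. lam r * tpow (v r) (i # js)) * prod_list (map (\<lambda>j. x $ j) js))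
       = (\<Sum>r\<in>UNIV. lam r * v r $ i * (\<Sum>js\<in>{js. length js = k - 1}. prod_list (map (\<lambda>j. v r $ j * x $ j) js)))"
      by (simp add: tpow_def sum_distrib_left sum_distrib_right prod_list_map_mult mult_ac)
         (rule sum.swap)
    also have "\<dots> = (\<Sum>r\<in>UNIV. lam r * v r $ i * (v r \<bullet> x) ^ (k - 1))"
      by (simp add: sum_lists_prod inner_vec_def)
    finally show ?thesis .
  qed
  then show ?thesis by (simp add: tensor_apply_def vec_eq_iff sum_component mult_ac)
qed

lemma inner_basis_sum:
  fixes v :: "'n::finite \<Rightarrow> real^'n"
  assumes orthonormal: "\<And>i j. v i \<bullet> v j = (if i = j then 1 else 0)"
  shows "v s \<bullet> (\<Sum>r\<in>UNIV. c r *\<^sub>R v r) = c s"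
proof -
  have "v s \<bullet> (\<Sum>r\<in>UNIV. c r *\<^sub>R v r) = (\<Sum>r\<in>UNIV. c r * (v s \<bullet> v r))"
    by (simp add: inner_sum_right)
  also have "\<dots> = (\<Sum>r\<in>UNIV. if s = r then c r else 0)"
    by (rule sum.cong) (simp_all add: orthonormal)
  finally show ?thesis by simp
qed

lemma reconstruct:
  fixes v :: "'n::finite \<Rightarrow> real^'n"
  assumes orthonormal: "\<And>i j. v i \<bullet> v j = (if i = j then 1 else 0)"
  shows "x = (\<Sum>r\<in>UNIV. (v r \<bullet> x) *\<^sub>R v r)"
proof -
  define V :: "real^'n^'n" where "V = (\<chi> r. v r)"
  have "V ** transpose V = (\<chi> i j. v i \<bullet> v j)"
    unfolding V_def vec_eq_iff matrix_matrix_mult_def transpose_def inner_vec_def by simp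
  also have "\<dots> = mat 1"
    unfolding orthonormal mat_def by simp
  finally have "transpose V ** V = mat 1" using matrix_left_right_inverse by blast
  hence "x = transpose V *v (V *v x)" by (simp add: matrix_vector_mul_assoc)
  also have "\<dots> = (\<Sum>r\<in>UNIV. (v r \<bullet> x) *\<^sub>R v r)"
    unfolding V_def vec_eq_iff matrix_vector_mult_def transpose_def inner_vec_def
    by (simp add: sum_component mult_ac)
  finally show ?thesis .
qed

theorem theorem1:
  fixes k :: nat
    and v :: "'n::finite \<Rightarrow> real^'n"
    and lam kap :: "'n \<Rightarrow> real"
    and A :: "'n list \<Rightarrow> real"
    and K :: "real^'n^'n"
    and x :: "real \<Rightarrow> real^'n"
    and I :: "real set"
  assumes k3: "k \<ge> 3"
    and orthonormal: "\<And>i j. v i \<bullet> v j = (if i = j then 1 else 0)"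
    and A_def: "A = (\<lambda>is. \<Sum>r\<in>UNIV. lam r * tpow (v r) is)"
    and K_def: "K = (\<Sum>r\<in>UNIV. kap r *\<^sub>R outer (v r) (v r))"
    and I_int: "is_interval I" and I0: "0 \<in> I"
    and ode: "\<And>t. t \<in> I \<Longrightarrow>
        (x has_vector_derivative (K *v x t + tensor_apply A k (x t))) (at t within I)"
  shows "(\<forall>r. \<forall>t\<in>I. ((\<lambda>s. v r \<bullet> x s) has_real_derivative
              (kap r * (v r \<bullet> x t) + lam r * (v r \<bullet> x t) ^ (k - 1))) (at t within I))
    \<and> (\<forall>t\<in>I. x t = (\<Sum>r\<in>UNIV. (v r \<bullet> x t) *\<^sub>R v r))
    \<and> (\<forall>r J. kap r \<noteq> 0 \<and> is_interval J \<and> 0 \<in> J \<and> J \<subseteq> I \<and> (\<forall>t\<in>J. v r \<bullet> x t \<noteq> 0) \<longrightarrow>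
         (\<forall>t\<in>J.
            let y0 = v r \<bullet> x 0; p = k - 2;
                B = exp (- real p * kap r * t)
                    - lam r / kap r * y0 ^ p * (1 - exp (- real p * kap r * t))
            in B > 0 \<and> v r \<bullet> x t = y0 * B powr (- 1 / real p)))
    \<and> (\<forall>r J. kap r = 0 \<and> is_interval J \<and> 0 \<in> J \<and> J \<subseteq> I \<and> (\<forall>t\<in>J. v r \<bullet> x t \<noteq> 0) \<longrightarrow>
         (\<forall>t\<in>J.
            let y0 = v r \<bullet> x 0; p = k - 2;
                B = 1 - real p * lam r * y0 ^ p * t
            in B > 0 \<and> v r \<bullet> x t = y0 * B powr (- 1 / real p)))"
proof -
  have sol: "\<And>t. t \<in> I \<Longrightarrow> K *v x t + tensor_apply A k (x t)
     = (\<Sum>r\<in>UNIV. (kap r * (v r \<bullet> x t)) *\<^sub>R v r) + (\<Sum>r\<in>UNIV. (lam r * (v r \<bullet> x t) ^ (k - 1)) *\<^sub>R v r)"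
    unfolding K_def A_def K_apply T_apply by simp
  have P1: "\<forall>r. \<forall>t\<in>I. ((\<lambda>s. v r \<bullet> x s) has_real_derivative
              (kap r * (v r \<bullet> x t) + lam r * (v r \<bullet> x t) ^ (k - 1))) (at t within I)"
  proof (intro allI ballI)
    fix r t assume t: "t \<in> I"
    define D where "D = K *v x t + tensor_apply A k (x t)"
    have "((\<lambda>s. v r \<bullet> x s) has_derivative (\<lambda>h. v r \<bullet> (h *\<^sub>R D))) (at t within I)"
      unfolding D_def by (rule has_derivative_inner_right[OF ode[OF t, unfolded has_vector_derivative_def]])
    moreover have "(\<lambda>h. v r \<bullet> (h *\<^sub>R D)) = (*) (v r \<bullet> D)" by (auto simp: fun_eq_iff)
    moreover have "v r \<bullet> D = kap r * (v r \<bullet> x t) + lam r * (v r \<bullet> x t) ^ (k - 1)"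
      unfolding D_def sol[OF t] inner_add_right inner_basis_sum[OF orthonormal] ..
    ultimately show "((\<lambda>s. v r \<bullet> x s) has_real_derivative
              (kap r * (v r \<bullet> x t) + lam r * (v r \<bullet> x t) ^ (k - 1))) (at t within I)"
      by (simp add: has_field_derivative_def)
  qed
  have P2: "\<forall>t\<in>I. x t = (\<Sum>r\<in>UNIV. (v r \<bullet> x t) *\<^sub>R v r)"
    using reconstruct[OF orthonormal] by blast
  have main: "(v r \<bullet> x t) ^ (k - 2) * (if kap r = 0 then 1 - real (k - 2) * lam r * (v r \<bullet> x 0) ^ (k - 2) * t
     else exp (- real (k - 2) * kap r * t) - lam r / kap r * (v r \<bullet> x 0) ^ (k - 2) * (1 - exp (- real (k - 2) * kap r * t)))
     = (v r \<bullet> x 0) ^ (k - 2)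
     \<and> (v r \<bullet> x 0) * (v r \<bullet> x t) > 0"
    if J: "is_interval J" "0 \<in> J" "J \<subseteq> I" "\<forall>t\<in>J. v r \<bullet> x t \<noteq> 0" and t: "t \<in> J" for r J t
  proof -
    have kk: "k - 1 = Suc (k - 2)" using k3 by simp
    have DJ: "((\<lambda>s. v r \<bullet> x s) has_real_derivative
       (kap r * (v r \<bullet> x s) + lam r * (v r \<bullet> x s) ^ Suc (k - 2))) (at s within J)" if "s \<in> J" for s
      using DERIV_subset[OF P1[rule_format, OF subsetD[OF J(3) that]] J(3)] unfolding kk .
    have cont: "continuous_on J (\<lambda>s. v r \<bullet> x s)"
      using DJ DERIV_continuous continuous_on_eq_continuous_within by blast
    have p1: "1 \<le> k - 2" using k3 by simp
    show ?thesis
      using scalar_ode[OF J(1,2) p1 DJ J(4) t] same_sign[OF J(1,2) cont J(4) t] by (rule conjI)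
  qed
  show ?thesis
  proof (intro conjI P1 P2 allI impI ballI)
    fix r J t
    assume a: "kap r \<noteq> 0 \<and> is_interval J \<and> 0 \<in> J \<and> J \<subseteq> I \<and> (\<forall>t\<in>J. v r \<bullet> x t \<noteq> 0)" and t: "t \<in> J"
    have m: "(v r \<bullet> x t) ^ (k - 2) * (exp (- real (k - 2) * kap r * t) - lam r / kap r * (v r \<bullet> x 0) ^ (k - 2) * (1 - exp (- real (k - 2) * kap r * t)))
     = (v r \<bullet> x 0) ^ (k - 2)" "(v r \<bullet> x 0) * (v r \<bullet> x t) > 0"
      using main[of J r t] a t unfolding if_not_P[OF conjunct1[OF a]] by blast+
    have nz: "v r \<bullet> x t \<noteq> 0" using a t by auto
    show "let y0 = v r \<bullet> x 0; p = k - 2;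
                B = exp (- real p * kap r * t)
                    - lam r / kap r * y0 ^ p * (1 - exp (- real p * kap r * t))
            in B > 0 \<and> v r \<bullet> x t = y0 * B powr (- 1 / real p)"
      unfolding Let_def
      apply (rule final_powr)
      using k3 apply simp
      using m(2) apply simp
      using solve_B[OF nz m(1)] by simp
  next
    fix r J t
    assume a: "kap r = 0 \<and> is_interval J \<and> 0 \<in> J \<and> J \<subseteq> I \<and> (\<forall>t\<in>J. v r \<bullet> x t \<noteq> 0)" and t: "t \<in> J"
    have m: "(v r \<bullet> x t) ^ (k - 2) * (1 - real (k - 2) * lam r * (v r \<bullet> x 0) ^ (k - 2) * t)
     = (v r \<bullet> x 0) ^ (k - 2)" "(v r \<bullet> x 0) * (v r \<bullet> x t) > 0"
      using main[of J r t] a t unfolding if_P[OF conjunct1[OF a]] by blast+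
    have nz: "v r \<bullet> x t \<noteq> 0" using a t by auto
    show "let y0 = v r \<bullet> x 0; p = k - 2;
                B = 1 - real p * lam r * y0 ^ p * t
            in B > 0 \<and> v r \<bullet> x t = y0 * B powr (- 1 / real p)"
      unfolding Let_def
      apply (rule final_powr)
      using k3 apply simp
      using m(2) apply simp
      using solve_B[OF nz m(1)] by simp
  qed
qed

end
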